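(* Let $k,n$ be positive integers with $k\leqslant n$ and let $X\subseteq[n]^k_<$ be either an order ideal or an interval of $[n]^k_<$ in the Bruhat order. If $L$ is a linear extension of $X$, then $\partial_D L=\partial_H L$.
   Context: $[n]:=\{1,\ldots,n\}$; $[n]^k_<$ denotes the set of $k$-element subsets of $[n]$, identified with increasing tuples, with Bruhat order $x\leqslant y$ iff $x_i\leqslant y_i$ for all $i\in[k]$. An interval is a set $\{z: x\leqslant z\leqslant y\}$. A linear extension of $X$ is a tuple $L=(L_1,\ldots,L_h)$ listing each element of $X$ exactly once such that $L_i<L_j$ implies $i<j$. For a tuple $C=(C_1,\ldots,C_h)$ of distinct elements of $[n]^k_<$: the dual graph $D(C)$ is the graph on $[h]$ with $\{i,j\}$ an edge iff $|C_i\cap C_j|=k-1$; the Hasse graph $H(C)$ is the graph on $[h]$ with $\{i,j\}$ an edge iff one of $C_i,C_j$ covers the other in the Bruhat order. For a graph $G$ on $[h]$, its track $T_G=\{v_1,\ldots,v_r\}$ is defined by $v_1=1$ and, for $i\geqslant2$, $v_i=\min\{j\in[h]: j>v_{i-1},\ \{v_{i-1},j\}\text{ an edge}\}$ if this exists, otherwise $r=i-1$. The promotion $\partial_G\in S_h$ is given by $\partial_G(i)=i-1$ for $i\notin T_G$, $\partial_G(v_j)=v_{j+1}-1$ for $j\in[r-1]$, $\partial_G(v_r)=h$. For $\sigma\in S_h$, $\sigma C:=(C_{\sigma^{-1}(1)},\ldots,C_{\sigma^{-1}(h)})$. Define $\partial_D C:=\partial_{D(C)}C$ and $\partial_H C:=\partial_{H(C)}C$.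 *)

theory Defs
  imports Main
begin

text \<open>Elements of [n]^k_< are represented as finite sets of naturals A with
  A \<subseteq> {1..n} and card A = k; the associated increasing tuple is
  sorted_list_of_set A (0-indexed list).\<close>

definition ksubsets :: "nat \<Rightarrow> nat \<Rightarrow> nat set set" where
  "ksubsets n k = {A. A \<subseteq> {1..n} \<and> card A = k}"

definition bruhat_le :: "nat \<Rightarrow> nat set \<Rightarrow> nat set \<Rightarrow> bool" where
  "bruhat_le k x y = (\<forall>i<k. sorted_list_of_set x ! i \<le> sorted_list_of_set y ! i)"

definition bruhat_less :: "nat \<Rightarrow> nat set \<Rightarrow> nat set \<Rightarrow> bool" where
  "bruhat_less k x y = (bruhat_le k x y \<and> x \<noteq> y)"

definition bruhat_covers :: "nat \<Rightarrow> nat \<Rightarrow> nat set \<Rightarrow> nat set \<Rightarrow> bool" where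
  "bruhat_covers n k y x = (x \<in> ksubsets n k \<and> y \<in> ksubsets n k \<and> bruhat_less k x y \<and>
     \<not> (\<exists>z \<in> ksubsets n k. bruhat_less k x z \<and> bruhat_less k z y))"

definition order_ideal :: "nat \<Rightarrow> nat \<Rightarrow> nat set set \<Rightarrow> bool" where
  "order_ideal n k X = (X \<subseteq> ksubsets n k \<and>
     (\<forall>y\<in>X. \<forall>x\<in>ksubsets n k. bruhat_le k x y \<longrightarrow> x \<in> X))"

definition bruhat_interval :: "nat \<Rightarrow> nat \<Rightarrow> nat set \<Rightarrow> nat set \<Rightarrow> nat set set" where
  "bruhat_interval n k x y = {z \<in> ksubsets n k. bruhat_le k x z \<and> bruhat_le k z y}"

definition is_interval :: "nat \<Rightarrow> nat \<Rightarrow> nat set set \<Rightarrow> bool" where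
  "is_interval n k X = (\<exists>x\<in>ksubsets n k. \<exists>y\<in>ksubsets n k. X = bruhat_interval n k x y)"

text \<open>Tuples C = (C_1,...,C_h) are lists; C_i is C ! (i - 1).\<close>
definition linear_extension :: "nat \<Rightarrow> nat set set \<Rightarrow> nat set list \<Rightarrow> bool" where
  "linear_extension k X L = (distinct L \<and> set L = X \<and>
     (\<forall>i\<in>{1..length L}. \<forall>j\<in>{1..length L}.
        bruhat_less k (L ! (i - 1)) (L ! (j - 1)) \<longrightarrow> i < j))"

definition dual_graph :: "nat \<Rightarrow> nat set list \<Rightarrow> nat \<Rightarrow> nat \<Rightarrow> bool" where
  "dual_graph k C i j = (i \<noteq> j \<and> i \<in> {1..length C} \<and> j \<in> {1..length C} \<and>
     card (C ! (i - 1) \<inter> C ! (j - 1)) = k - 1)"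

definition hasse_graph :: "nat \<Rightarrow> nat \<Rightarrow> nat set list \<Rightarrow> nat \<Rightarrow> nat \<Rightarrow> bool" where
  "hasse_graph n k C i j = (i \<noteq> j \<and> i \<in> {1..length C} \<and> j \<in> {1..length C} \<and>
     (bruhat_covers n k (C ! (i - 1)) (C ! (j - 1)) \<or> bruhat_covers n k (C ! (j - 1)) (C ! (i - 1))))"

text \<open>Track of a graph G on [h]: v_1 = 1, v_i = min {j \<in> [h]. j > v_{i-1}, G v_{i-1} j}.\<close>
inductive_set track :: "(nat \<Rightarrow> nat \<Rightarrow> bool) \<Rightarrow> nat \<Rightarrow> nat set" for G h where
  start: "1 \<le> h \<Longrightarrow> 1 \<in> track G h"
| step: "v \<in> track G h \<Longrightarrow> \<exists>j. v < j \<and> j \<le> h \<and> G v j \<Longrightarrow>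
           (LEAST j. v < j \<and> j \<le> h \<and> G v j) \<in> track G h"

text \<open>Promotion: i \<mapsto> i-1 off the track, v_j \<mapsto> v_{j+1} - 1, v_r \<mapsto> h.\<close>
definition promotion :: "(nat \<Rightarrow> nat \<Rightarrow> bool) \<Rightarrow> nat \<Rightarrow> nat \<Rightarrow> nat" where
  "promotion G h i = (if i \<in> track G h then
       (if \<exists>j. i < j \<and> j \<le> h \<and> G i j then (LEAST j. i < j \<and> j \<le> h \<and> G i j) - 1 else h)
     else i - 1)"

definition perm_act :: "(nat \<Rightarrow> nat) \<Rightarrow> 'a list \<Rightarrow> 'a list" where
  "perm_act \<sigma> C = map (\<lambda>i. C ! (inv_into {1..length C} \<sigma> i - 1)) [1..<length C + 1]"

definition promD :: "nat \<Rightarrow> nat set list \<Rightarrow> nat set list" where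
  "promD k C = perm_act (promotion (dual_graph k C) (length C)) C"

definition promH :: "nat \<Rightarrow> nat \<Rightarrow> nat set list \<Rightarrow> nat set list" where
  "promH n k C = perm_act (promotion (hasse_graph n k C) (length C)) C"

end

theory Submission
  imports Defs
begin

lemma sl_less:
  assumes "i < j" "j < card A"
  shows "sorted_list_of_set A ! i < sorted_list_of_set A ! (j::nat)"
  using sorted_wrt_nth_less[OF strict_sorted_list_of_set, of i j A] assms by simp

lemma sl_in:
  assumes "finite A" "i < card A"
  shows "sorted_list_of_set A ! i \<in> (A::nat set)"
  using assms nth_mem[of i "sorted_list_of_set A"] by simp

lemma sl_ex:
  assumes "finite A" "a \<in> (A::nat set)"
  shows "\<exists>j < card A. sorted_list_of_set A ! j = a"
  using assms in_set_conv_nth[of a "sorted_list_of_set A"] by auto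

lemma inj_le:
  fixes A B :: "nat set"
  assumes fA: "finite A" and fB: "finite B" and c: "card A = card B" and inj: "inj_on f A"
    and img: "f ` A \<subseteq> B" and mono: "\<forall>a\<in>A. a \<le> f a" and i: "i < card A"
  shows "sorted_list_of_set A ! i \<le> sorted_list_of_set B ! i"
proof (rule ccontr)
  define xs where "xs = sorted_list_of_set A"
  define ys where "ys = sorted_list_of_set B"
  define k where "k = card A"
  assume "\<not> ?thesis"
  then have lt: "ys ! i < xs ! i" by (simp add: xs_def ys_def)
  define t where "t = xs ! i"
  define S where "S = {a\<in>A. t \<le> a}"
  have "(\<lambda>j. xs ! j) ` {i..<k} \<subseteq> S"
  proof
    fix a assume "a \<in> (\<lambda>j. xs ! j) ` {i..<k}"
    then obtain j where j: "i \<le> j" "j < k" "a = xs ! j" by auto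
    have "xs ! i \<le> xs ! j" using sl_less[of i j A] j by (cases "i = j") (auto simp: xs_def k_def)
    then show "a \<in> S" using j sl_in[OF fA, of j] by (auto simp: S_def t_def xs_def k_def)
  qed
  moreover have "inj_on (\<lambda>j. xs ! j) {i..<k}"
    unfolding inj_on_def using sl_less[of _ _ A] 
    by (metis atLeastLessThan_iff linorder_neq_iff order_less_irrefl xs_def k_def)
  ultimately have c1: "k - i \<le> card S"
    by (metis card_atLeastLessThan card_image card_mono fA S_def finite_subset mem_Collect_eq subsetI)
  have "f ` S \<subseteq> (\<lambda>j. ys ! j) ` {Suc i..<k}"
  proof
    fix b assume "b \<in> f ` S"
    then obtain a where a: "a \<in> A" "t \<le> a" "b = f a" by (auto simp: S_def)
    then have bB: "b \<in> B" "t \<le> b" using img mono by auto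
    obtain j where j: "j < k" "ys ! j = b" using sl_ex[OF fB bB(1)] c by (auto simp: ys_def k_def)
    have "i < j"
    proof (rule ccontr)
      assume "\<not> i < j"
      then have "ys ! j \<le> ys ! i" using sl_less[of j i B] i c
        by (cases "i = j") (auto simp: ys_def)
      then show False using lt bB j by (simp add: t_def)
    qed
    then show "b \<in> (\<lambda>j. ys ! j) ` {Suc i..<k}" using j by auto
  qed
  then have "card (f ` S) \<le> k - Suc i"
    by (metis card_atLeastLessThan card_image_le finite_atLeastLessThan card_mono finite_imageI le_trans)
  moreover have "card (f ` S) = card S"
    using inj by (intro card_image) (auto simp: S_def intro: inj_on_subset)
  ultimately show False using c1 i k_def by linarith
qed

lemma ks_fin: "x \<in> ksubsets n k \<Longrightarrow> finite x"
  unfolding ksubsets_def using finite_subset by blast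

lemma ks_card: "x \<in> ksubsets n k \<Longrightarrow> card x = k"
  unfolding ksubsets_def by auto

lemma bruhat_le_refl: "bruhat_le k x x" by (simp add: bruhat_le_def)

lemma bruhat_le_trans: "bruhat_le k x y \<Longrightarrow> bruhat_le k y z \<Longrightarrow> bruhat_le k x z"
  unfolding bruhat_le_def using le_trans by blast

lemma sl_eq:
  assumes "x \<in> ksubsets n k" "y \<in> ksubsets n k"
    and "\<forall>i<k. sorted_list_of_set x ! i = sorted_list_of_set y ! i"
  shows "x = y"
proof -
  have "sorted_list_of_set x = sorted_list_of_set y"
    using assms ks_card[OF assms(1)] ks_card[OF assms(2)] by (intro nth_equalityI) auto
  then show ?thesis using assms(1,2) ks_fin
    by (metis set_sorted_list_of_set)
qed

lemma less_ex:
  assumes "x \<in> ksubsets n k" "y \<in> ksubsets n k" "bruhat_less k x y"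
  shows "\<exists>i<k. sorted_list_of_set x ! i < sorted_list_of_set y ! i"
proof (rule ccontr)
  assume "\<not> ?thesis"
  then have "\<forall>i<k. sorted_list_of_set x ! i = sorted_list_of_set y ! i"
    using assms(3) unfolding bruhat_less_def bruhat_le_def by (meson le_neq_implies_less)
  then show False using sl_eq[OF assms(1,2)] assms(3) by (simp add: bruhat_less_def)
qed

lemma dual_comparable:
  assumes xk: "x \<in> ksubsets n k" and yk: "y \<in> ksubsets n k" and ne: "x \<noteq> y"
    and c: "card (x \<inter> y) = k - 1" and k: "0 < k"
  shows "bruhat_le k x y \<or> bruhat_le k y x"
proof -
  have fx: "finite x" and fy: "finite y" using xk yk ks_fin by auto
  have cx: "card x = k" and cy: "card y = k" using xk yk ks_card by auto
  have "card (x - y) = 1" using card_Diff_subset_Int[of x y] fx c cx k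
    by (simp add: card_Diff_subset_Int)
  then obtain a where a: "x - y = {a}" by (meson card_1_singletonE)
  have "card (y - x) = 1" using card_Diff_subset_Int[of y x] fy c cy k
    by (simp add: card_Diff_subset_Int Int_commute)
  then obtain b where b: "y - x = {b}" by (meson card_1_singletonE)
  have ab: "a \<noteq> b" using a b by auto
  have gen: "bruhat_le k A B" if "A \<in> ksubsets n k" "B \<in> ksubsets n k" "A - B = {p}" "B - A = {q}" "p < q"
    for A B p q
  proof -
    have q: "q \<notin> A" "q \<in> B" "p \<in> A" using that(3,4) by blast+
    have AB: "\<forall>t\<in>A. t \<noteq> p \<longrightarrow> t \<in> B" using that(3) by blast
    let ?f = "\<lambda>t. if t = p then q else t"
    have "inj_on ?f A" unfolding inj_on_def using q by auto
    moreover have "?f ` A \<subseteq> B" using q AB by auto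
    moreover have "\<forall>t\<in>A. t \<le> ?f t" using that(5) by auto
    moreover have "finite A" "finite B" "card A = k" "card B = k"
      using that(1,2) ks_fin ks_card by auto
    ultimately show ?thesis unfolding bruhat_le_def
      using inj_le[of A B ?f] by simp
  qed
  show ?thesis
  proof (cases "a < b")
    case True then show ?thesis using gen[OF xk yk a b] by simp
  next
    case False then have "b < a" using ab by simp
    then show ?thesis using gen[OF yk xk b a] by simp
  qed
qed


lemma step_ex:
  assumes xk: "x \<in> ksubsets n k" and yk: "y \<in> ksubsets n k" and lt: "bruhat_less k x y"
  shows "\<exists>z\<in>ksubsets n k. bruhat_less k x z \<and> bruhat_le k z y \<and> card (x \<inter> z) = k - 1"
proof -
  define xs where "xs = sorted_list_of_set x"
  define ys where "ys = sorted_list_of_set y"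
  have fx: "finite x" and fy: "finite y" using xk yk ks_fin by auto
  have cx: "card x = k" and cy: "card y = k" using xk yk ks_card by auto
  have lx: "length xs = k" and ly: "length ys = k" using cx cy by (auto simp: xs_def ys_def)
  have sx: "sorted_wrt (<) xs" and sy: "sorted_wrt (<) ys" by (auto simp: xs_def ys_def)
  have setx: "set xs = x" and sety: "set ys = y" using fx fy by (auto simp: xs_def ys_def)
  have le: "\<forall>j<k. xs ! j \<le> ys ! j" using lt by (simp add: bruhat_less_def bruhat_le_def xs_def ys_def)
  define I where "I = {i. i < k \<and> xs ! i < ys ! i}"
  have "I \<noteq> {}" using less_ex[OF xk yk lt] by (auto simp: I_def xs_def ys_def)
  moreover have fI: "finite I" by (auto simp: I_def)
  ultimately have iI: "Max I \<in> I" by simp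
  define i where "i = Max I"
  have ik: "i < k" and xyi: "xs ! i < ys ! i" using iI by (auto simp: I_def i_def)
  have above: "xs ! j = ys ! j" if "i < j" "j < k" for j
  proof (rule ccontr)
    assume "xs ! j \<noteq> ys ! j"
    then have "j \<in> I" using le that by (auto simp: I_def)
    then have "j \<le> i" using fI by (simp add: i_def)
    then show False using that by simp
  qed
  define zs where "zs = xs[i := xs ! i + 1]"
  have lz: "length zs = k" using lx by (simp add: zs_def)
  have zn: "zs ! j = (if j = i then xs ! i + 1 else xs ! j)" if "j < k" for j
    using that lx by (simp add: zs_def nth_list_update)
  have sz: "sorted_wrt (<) zs"
    unfolding sorted_wrt_iff_nth_less
  proof (intro allI impI)
    fix p q assume pq: "p < q" "q < length zs"
    then have q: "q < k" using lz by simp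
    have xpq: "xs ! p < xs ! q" using sorted_wrt_nth_less[OF sx, of p q] pq lx lz by simp
    show "zs ! p < zs ! q"
    proof (cases "p = i")
      case True
      then have "xs ! q = ys ! q" using above pq q by simp
      moreover have "ys ! i < ys ! q" using sorted_wrt_nth_less[OF sy, of i q] pq q ly True by simp
      ultimately show ?thesis using True zn pq q xyi by simp
    next
      case False
      then show ?thesis using zn pq q xpq by (cases "q = i") auto
    qed
  qed
  have dz: "distinct zs" and sortz: "sorted zs" using sz by (auto simp: strict_sorted_iff)
  define z where "z = set zs"
  have slz: "sorted_list_of_set z = zs"
    using sorted_list_of_set.idem_if_sorted_distinct[OF sortz dz] by (simp add: z_def)
  have dx: "distinct xs" using sx by (auto simp: strict_sorted_iff)
  have zset: "z = insert (xs ! i + 1) (x - {xs ! i})"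
    using set_update_distinct[OF dx, of i] ik lx setx by (simp add: z_def zs_def)
  have notin: "xs ! i + 1 \<notin> x"
  proof
    assume "xs ! i + 1 \<in> x"
    then obtain j where j: "j < k" "xs ! j = xs ! i + 1" using setx lx by (metis in_set_conv_nth)
    show False
    proof (cases "j \<le> i")
      case True
      then have "xs ! j \<le> xs ! i" using sorted_wrt_nth_less[OF sx, of j i] ik lx by (cases "j = i") auto
      then show False using j by simp
    next
      case False
      then have "xs ! j = ys ! j" using above j by simp
      moreover have "ys ! i < ys ! j" using sorted_wrt_nth_less[OF sy, of i j] False j ly by simp
      ultimately show False using j xyi by simp
    qed
  qed
  have yn: "ys ! i \<le> n" using yk sety ly ik nth_mem[of i ys] by (auto simp: ksubsets_def)
  have zk: "z \<in> ksubsets n k"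
    unfolding ksubsets_def
  proof (intro CollectI conjI)
    show "z \<subseteq> {1..n}" using zset xk yn xyi by (auto simp: ksubsets_def)
    show "card z = k" using distinct_card[OF dz] lz by (simp add: z_def)
  qed
  have "bruhat_le k x z" unfolding bruhat_le_def using slz zn by (simp add: xs_def[symmetric])
  moreover have "x \<noteq> z" using notin zset by auto
  moreover have "bruhat_le k z y" unfolding bruhat_le_def using slz zn le xyi
    by (simp add: xs_def[symmetric] ys_def[symmetric])
  moreover have "card (x \<inter> z) = k - 1"
  proof -
    have "x \<inter> z = x - {xs ! i}" using zset notin by auto
    moreover have "xs ! i \<in> x" using setx lx ik by auto
    ultimately show ?thesis using fx cx by simp
  qed
  ultimately show ?thesis using zk by (auto simp: bruhat_less_def)
qed

definition mu :: "nat \<Rightarrow> nat set \<Rightarrow> nat" where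
  "mu k z = (\<Sum>i<k. sorted_list_of_set z ! i)"

lemma mu_less:
  assumes "x \<in> ksubsets n k" "y \<in> ksubsets n k" "bruhat_less k x y"
  shows "mu k x < mu k y"
  unfolding mu_def
proof (rule sum_strict_mono_ex1)
  show "\<forall>i\<in>{..<k}. sorted_list_of_set x ! i \<le> sorted_list_of_set y ! i"
    using assms(3) by (auto simp: bruhat_less_def bruhat_le_def)
  show "\<exists>i\<in>{..<k}. sorted_list_of_set x ! i < sorted_list_of_set y ! i"
    using less_ex[OF assms] by auto
qed simp

lemma cover_ex:
  assumes xk: "x \<in> ksubsets n k" and yk: "y \<in> ksubsets n k" and lt: "bruhat_less k x y"
  shows "\<exists>z. bruhat_covers n k z x \<and> bruhat_le k z y"
proof -
  define P where "P z = (z \<in> ksubsets n k \<and> bruhat_less k x z \<and> bruhat_le k z y)" for z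
  have "P y" using yk lt bruhat_le_refl by (simp add: P_def)
  then obtain z where z: "P z" and zmin: "\<forall>w. P w \<longrightarrow> mu k z \<le> mu k w"
    using ex_has_least_nat[of P y "mu k"] by blast
  have "bruhat_covers n k z x"
    unfolding bruhat_covers_def
  proof (intro conjI)
    show "\<not> (\<exists>w\<in>ksubsets n k. bruhat_less k x w \<and> bruhat_less k w z)"
    proof
      assume "\<exists>w\<in>ksubsets n k. bruhat_less k x w \<and> bruhat_less k w z"
      then obtain w where w: "w \<in> ksubsets n k" "bruhat_less k x w" "bruhat_less k w z" by blast
      have "P w" using w z bruhat_le_trans by (auto simp: P_def bruhat_less_def)
      moreover have "mu k w < mu k z" using mu_less[OF w(1) _ w(3)] z by (simp add: P_def)
      ultimately show False using zmin by fastforce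
    qed
  qed (use xk z in \<open>auto simp: P_def\<close>)
  then show ?thesis using z by (auto simp: P_def)
qed


lemma least_cong:
  fixes P Q :: "nat \<Rightarrow> bool"
  assumes pq: "\<And>j. P j \<Longrightarrow> \<exists>m\<le>j. Q m" and qp: "\<And>j. Q j \<Longrightarrow> \<exists>m\<le>j. P m"
  shows "Ex P = Ex Q" "Least P = Least Q"
proof -
  show "Ex P = Ex Q" using pq qp by blast
  show "Least P = Least Q"
  proof (cases "Ex P")
    case True
    then have eq: "Ex Q" using pq by blast
    have a: "Least Q \<le> Least P"
      using pq[OF LeastI_ex[OF True]] by (metis Least_le le_trans)
    have b: "Least P \<le> Least Q"
      using qp[OF LeastI_ex[OF eq]] by (metis Least_le le_trans)
    show ?thesis using a b by simp
  next
    case False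
    then have "\<not> Ex Q" using qp by blast
    then have "P = Q" using False by auto
    then show ?thesis by simp
  qed
qed

lemma promotion_cong:
  assumes e: "\<And>v. (\<exists>j. v < j \<and> j \<le> h \<and> G v j) = (\<exists>j. v < j \<and> j \<le> h \<and> G' v j)"
    and l: "\<And>v. (LEAST j. v < j \<and> j \<le> h \<and> G v j) = (LEAST j. v < j \<and> j \<le> h \<and> G' v j)"
  shows "promotion G h = promotion G' h"
proof -
  have 1: "t \<in> track G' h" if "t \<in> track G h" for t
    using that
  proof (induction rule: track.induct)
    case start then show ?case by (rule track.start)
  next
    case (step v) then show ?case using track.step[of v G' h] e l by simp
  qed
  have 2: "t \<in> track G h" if "t \<in> track G' h" for t
    using that
  proof (induction rule: track.induct)
    case start then show ?case by (rule track.start)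
  next
    case (step v) then show ?case using track.step[of v G h] e l by simp
  qed
  have t: "track G h = track G' h" using 1 2 by blast
  show ?thesis unfolding promotion_def by (intro ext) (simp only: t e l)
qed

theorem corollary5p8:
  fixes n k :: nat and X :: "nat set set" and L :: "nat set list"
  assumes "0 < k" and "k \<le> n"
    and "order_ideal n k X \<or> is_interval n k X"
    and "linear_extension k X L"
  shows "promD k L = promH n k L"
proof -
  define h where "h = length L"
  have XK: "X \<subseteq> ksubsets n k" using assms(3)
    by (auto simp: order_ideal_def is_interval_def bruhat_interval_def)
  have conv: "z \<in> X" if "a \<in> X" "b \<in> X" "z \<in> ksubsets n k" "bruhat_le k a z" "bruhat_le k z b"
    for a b z
    using assms(3)
  proof
    assume "order_ideal n k X" then show ?thesis using that by (auto simp: order_ideal_def)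
  next
    assume "is_interval n k X"
    then obtain p q where X: "X = bruhat_interval n k p q" by (auto simp: is_interval_def)
    show ?thesis using that bruhat_le_trans unfolding X bruhat_interval_def by blast
  qed
  have dL: "distinct L" and sL: "set L = X"
    and ordL: "\<And>i j. i \<in> {1..h} \<Longrightarrow> j \<in> {1..h} \<Longrightarrow> bruhat_less k (L ! (i - 1)) (L ! (j - 1)) \<Longrightarrow> i < j"
    using assms(4) by (auto simp: linear_extension_def h_def)
  have inX: "L ! (i - 1) \<in> X" if "i \<in> {1..h}" for i using that sL h_def by auto
  have idx: "\<exists>m\<in>{1..h}. L ! (m - 1) = z" if "z \<in> X" for z
  proof -
    have "z \<in> set L" using that sL by simp
    then obtain p where "p < h" "L ! p = z" unfolding h_def in_set_conv_nth by blast
    then show ?thesis by (intro bexI[of _ "Suc p"]) auto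
  qed
  have inj: "i = j" if "i \<in> {1..h}" "j \<in> {1..h}" "L ! (i - 1) = L ! (j - 1)" for i j
  proof -
    have "i - 1 < length L" "j - 1 < length L" using that(1,2) h_def by auto
    then have "i - 1 = j - 1" using that(3) nth_eq_iff_index_eq[OF dL] by blast
    then show ?thesis using that(1,2) by auto
  qed
  have place: "\<exists>m. v < m \<and> m \<le> j \<and> m \<le> h \<and> L ! (m - 1) = z"
    if "v \<in> {1..h}" "j \<in> {1..h}" "z \<in> ksubsets n k" "bruhat_less k (L ! (v - 1)) z"
       "bruhat_le k z (L ! (j - 1))" for v j z
  proof -
    have "z \<in> X" using conv[OF inX[OF that(1)] inX[OF that(2)] that(3)] that(4,5)
      by (simp add: bruhat_less_def)
    then obtain m where m: "m \<in> {1..h}" "L ! (m - 1) = z" using idx by blast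
    have "v < m" using ordL[OF that(1) m(1)] that(4) m by simp
    moreover have "m \<le> j"
    proof (cases "z = L ! (j - 1)")
      case True then show ?thesis using inj[OF m(1) that(2)] m by simp
    next
      case False then show ?thesis using ordL[OF m(1) that(2)] that(5) m
        by (simp add: bruhat_less_def)
    qed
    ultimately show ?thesis using m by auto
  qed
  define PD where "PD v j = (v < j \<and> j \<le> h \<and> dual_graph k L v j)" for v j
  define PH where "PH v j = (v < j \<and> j \<le> h \<and> hasse_graph n k L v j)" for v j
  have A: "\<exists>m\<le>j. PD v m" if "PH v j" for v j
  proof -
    have v: "v \<in> {1..h}" and j: "j \<in> {1..h}" and vj: "v < j"
      using that by (auto simp: PH_def hasse_graph_def h_def)
    have cov: "bruhat_covers n k (L ! (j - 1)) (L ! (v - 1)) \<or> bruhat_covers n k (L ! (v - 1)) (L ! (j - 1))"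
      using that by (auto simp: PH_def hasse_graph_def)
    have lt: "bruhat_less k (L ! (v - 1)) (L ! (j - 1))"
      using cov
    proof
      assume "bruhat_covers n k (L ! (v - 1)) (L ! (j - 1))"
      then have "j < v" using ordL[OF j v] by (simp add: bruhat_covers_def)
      then show ?thesis using vj by simp
    qed (simp add: bruhat_covers_def)
    obtain z where z: "z \<in> ksubsets n k" "bruhat_less k (L ! (v - 1)) z" "bruhat_le k z (L ! (j - 1))"
      "card (L ! (v - 1) \<inter> z) = k - 1"
      using step_ex[OF _ _ lt] XK inX[OF v] inX[OF j] by blast
    obtain m where m: "v < m" "m \<le> j" "m \<le> h" "L ! (m - 1) = z" using place[OF v j z(1-3)] by blast
    have "PD v m" using m v z(4) by (auto simp: PD_def dual_graph_def h_def)
    then show ?thesis using m by blast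
  qed
  have B: "\<exists>m\<le>j. PH v m" if "PD v j" for v j
  proof -
    have v: "v \<in> {1..h}" and j: "j \<in> {1..h}" and vj: "v < j"
      using that by (auto simp: PD_def dual_graph_def h_def)
    have c: "card (L ! (v - 1) \<inter> L ! (j - 1)) = k - 1" using that by (auto simp: PD_def dual_graph_def)
    have ne: "L ! (v - 1) \<noteq> L ! (j - 1)" using inj[OF v j] vj by auto
    have "bruhat_le k (L ! (v - 1)) (L ! (j - 1)) \<or> bruhat_le k (L ! (j - 1)) (L ! (v - 1))"
      using dual_comparable[OF _ _ ne c assms(1)] XK inX[OF v] inX[OF j] by blast
    then have lt: "bruhat_less k (L ! (v - 1)) (L ! (j - 1))"
    proof
      assume "bruhat_le k (L ! (j - 1)) (L ! (v - 1))"
      then have "j < v" using ordL[OF j v] ne by (simp add: bruhat_less_def)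
      then show ?thesis using vj by simp
    qed (use ne in \<open>simp add: bruhat_less_def\<close>)
    obtain z where z: "bruhat_covers n k z (L ! (v - 1))" "bruhat_le k z (L ! (j - 1))"
      using cover_ex[OF _ _ lt] XK inX[OF v] inX[OF j] by blast
    have zk: "z \<in> ksubsets n k" and zl: "bruhat_less k (L ! (v - 1)) z"
      using z(1) by (auto simp: bruhat_covers_def)
    obtain m where m: "v < m" "m \<le> j" "m \<le> h" "L ! (m - 1) = z" using place[OF v j zk zl z(2)] by blast
    have "PH v m" using m v z(1) by (auto simp: PH_def hasse_graph_def h_def)
    then show ?thesis using m by blast
  qed
  have "promotion (dual_graph k L) h = promotion (hasse_graph n k L) h"
  proof (rule promotion_cong)
    fix v
    show "(\<exists>j. v < j \<and> j \<le> h \<and> dual_graph k L v j) = (\<exists>j. v < j \<and> j \<le> h \<and> hasse_graph n k L v j)"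
      using least_cong(1)[of "PD v" "PH v"] B A unfolding PD_def PH_def by blast
    show "(LEAST j. v < j \<and> j \<le> h \<and> dual_graph k L v j) = (LEAST j. v < j \<and> j \<le> h \<and> hasse_graph n k L v j)"
      using least_cong(2)[of "PD v" "PH v"] B A unfolding PD_def PH_def by blast
  qed
  then show ?thesis by (simp add: promD_def promH_def h_def)
qed

end
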